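(* Let $\mathbf z=(z_i)_{i=1}^N$ be a crystal, $a_0\in(0,a)$, and let $\mathbf x=(x_i)_{i=1}^N$ satisfy $|x_i-x_j|>b$ for all non-neighboring pairs $\{i,j\}$ (of $\mathbf z$) and $|x_i-x_j|\ge a_0$ for all neighboring pairs $\langle i,j\rangle$. Put $\mathbf h=\mathbf x-\mathbf z$. Then there exists $C>0$, not depending on $\mathbf x$, $\mathbf z$ or $N$, such that $$\Big|H(\mathbf x)-\{H(\mathbf z)+\tfrac12\mathcal E_1(\mathbf h)\}\Big|\le C\sum_{\langle i,j\rangle}|h_i-h_j|^3,\qquad |G(\mathbf x)-\mathcal E_2(\mathbf h)|\le C\sum_{\langle i,j\rangle}|h_i-h_j|^3.$$
   Context: Let $d\ge1$, $U\in C^3_0(\mathbb R)$ even with a unique $a>0$ with $U(a)=\min_{r\ge0}U(r)$ and $\check c:=U''(a)>0$; $U(x)=U(|x|)$ on $\mathbb R^d$; $b=\inf\{r>0:U(s)=0\ \forall s>r\}$. $H(\mathbf x)=\sum_{i<j}U(x_i-x_j)$ and $G(\mathbf x)=\sum_{i=1}^N|\nabla_{x_i}H(\mathbf x)|^2$. A crystal is $\mathbf z$ with $|z_i-z_j|=a$ or $>b$ for $i\ne j$; neighboring pairs $\langle i,j\rangle$ are those with $|z_i-z_j|=a$. $\mathcal E_1(\mathbf h)=\frac{\check c}{a^2}\sum_{\langle i,j\rangle}(h_i-h_j,z_i-z_j)^2$ and $\mathcal E_2(\mathbf h)=\frac{\check c^2}{a^4}\sum_{i=1}^N\big|\sum_{j:\langle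 i,j\rangle}(h_i-h_j,z_i-z_j)(z_i-z_j)\big|^2$. *)

theory Defs
  imports "HOL-Analysis.Analysis"
begin

definition C3 :: "(real \<Rightarrow> real) \<Rightarrow> bool" where
  "C3 U \<longleftrightarrow> (\<forall>k<3. \<forall>r. ((deriv ^^ k) U has_real_derivative (deriv ^^ Suc k) U r) (at r))
     \<and> continuous_on UNIV ((deriv ^^ 3) U)"

definition compact_supp :: "(real \<Rightarrow> real) \<Rightarrow> bool" where
  "compact_supp U \<longleftrightarrow> (\<exists>R. \<forall>r. R < \<bar>r\<bar> \<longrightarrow> U r = 0)"

definition range_b :: "(real \<Rightarrow> real) \<Rightarrow> real" where
  "range_b U = Inf {r. 0 < r \<and> (\<forall>s>r. U s = 0)}"

definition Hen :: "(real \<Rightarrow> real) \<Rightarrow> nat \<Rightarrow> (nat \<Rightarrow> 'a::real_normed_vector) \<Rightarrow> real" where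
  "Hen U N x = (\<Sum>j<N. \<Sum>i<j. U (norm (x i - x j)))"

definition grad_i :: "(real \<Rightarrow> real) \<Rightarrow> nat \<Rightarrow> (nat \<Rightarrow> 'a::real_inner) \<Rightarrow> nat \<Rightarrow> 'a" where
  "grad_i U N x i = (THE D. GDERIV (\<lambda>y. Hen U N (x(i := y))) (x i) :> D)"

definition Gen :: "(real \<Rightarrow> real) \<Rightarrow> nat \<Rightarrow> (nat \<Rightarrow> 'a::real_inner) \<Rightarrow> real" where
  "Gen U N x = (\<Sum>i<N. (norm (grad_i U N x i))\<^sup>2)"

definition crystal :: "(real \<Rightarrow> real) \<Rightarrow> real \<Rightarrow> nat \<Rightarrow> (nat \<Rightarrow> 'a::real_normed_vector) \<Rightarrow> bool" where
  "crystal U a N z \<longleftrightarrow> (\<forall>i<N. \<forall>j<N. i \<noteq> j \<longrightarrow>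
      norm (z i - z j) = a \<or> norm (z i - z j) > range_b U)"

definition nbr :: "real \<Rightarrow> (nat \<Rightarrow> 'a::real_normed_vector) \<Rightarrow> nat \<Rightarrow> nat \<Rightarrow> bool" where
  "nbr a z i j \<longleftrightarrow> i \<noteq> j \<and> norm (z i - z j) = a"

definition nbr_pairs :: "real \<Rightarrow> nat \<Rightarrow> (nat \<Rightarrow> 'a::real_normed_vector) \<Rightarrow> (nat \<times> nat) set" where
  "nbr_pairs a N z = {(i, j). i < j \<and> j < N \<and> nbr a z i j}"

definition E1 :: "real \<Rightarrow> real \<Rightarrow> nat \<Rightarrow> (nat \<Rightarrow> 'a::real_inner) \<Rightarrow> (nat \<Rightarrow> 'a) \<Rightarrow> real" where
  "E1 c a N z h = c / a\<^sup>2 * (\<Sum>(i, j)\<in>nbr_pairs a N z. (inner (h i - h j) (z i - z j))\<^sup>2)"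

definition E2 :: "real \<Rightarrow> real \<Rightarrow> nat \<Rightarrow> (nat \<Rightarrow> 'a::real_inner) \<Rightarrow> (nat \<Rightarrow> 'a) \<Rightarrow> real" where
  "E2 c a N z h = c\<^sup>2 / a ^ 4 * (\<Sum>i<N.
      (norm (\<Sum>j\<in>{j. j < N \<and> nbr a z i j}. inner (h i - h j) (z i - z j) *\<^sub>R (z i - z j)))\<^sup>2)"

end

theory Submission
  imports Defs
begin

lemma taylor_D:
  assumes "C3 U" "0 < n" "k + n \<le> 3"
  shows "\<exists>t. (deriv^^k) U x = (\<Sum>m<n. (deriv^^(k+m)) U c / fact m * (x-c)^m)
           + (deriv^^(k+n)) U t / fact n * (x-c)^n"
proof (cases "x = c")
  case True
  have "(\<Sum>m<n. (deriv^^(k+m)) U c / fact m * (x-c)^m) = (\<Sum>m\<in>{0}. (deriv^^(k+m)) U c / fact m * (x-c)^m)"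
    by (rule sum.mono_neutral_right) (use True assms in auto)
  then show ?thesis using True assms by (intro exI[of _ c]) simp
next
  case False
  have d: "\<forall>m t. m < n \<and> min x c \<le> t \<and> t \<le> max x c \<longrightarrow>
      DERIV ((\<lambda>m. (deriv^^(k+m)) U) m) t :> (\<lambda>m. (deriv^^(k+m)) U) (Suc m) t"
    using assms(1,3) unfolding C3_def by auto
  show ?thesis
    using Taylor[of n "\<lambda>m. (deriv^^(k+m)) U" "(deriv^^k) U" "min x c" "max x c" c x] assms d False
    by auto
qed

lemma D_bound:
  assumes "C3 U" "compact_supp U" "k \<le> 3"
  shows "\<exists>M. \<forall>r. \<bar>(deriv^^k) U r\<bar> \<le> M"
proof -
  obtain R where R: "\<And>r. R < \<bar>r\<bar> \<Longrightarrow> U r = 0" using assms(2) unfolding compact_supp_def by auto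
  have Z: "\<forall>r. R < \<bar>r\<bar> \<longrightarrow> (deriv^^k) U r = 0" if "k \<le> 3" for k
    using that
  proof (induction k)
    case 0 then show ?case using R by simp
  next
    case (Suc k)
    show ?case
    proof (intro allI impI)
      fix r assume r: "R < \<bar>r\<bar>"
      have der: "DERIV ((deriv^^k) U) r :> (deriv^^(Suc k)) U r"
        using assms(1) Suc.prems unfolding C3_def by auto
      have "\<forall>y. \<bar>r - y\<bar> < \<bar>r\<bar> - R \<longrightarrow> (deriv^^k) U r = (deriv^^k) U y"
        using Suc r by auto
      then show "(deriv^^Suc k) U r = 0"
        using DERIV_local_const[OF der, of "\<bar>r\<bar> - R"] r by auto
    qed
  qed
  have cont: "continuous_on UNIV ((deriv^^k) U)"
  proof (cases "k < 3")
    case True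
    then have "\<forall>r. DERIV ((deriv^^k) U) r :> (deriv^^(Suc k)) U r" using assms(1) unfolding C3_def by auto
    then show ?thesis by (meson DERIV_isCont continuous_at_imp_continuous_on)
  next
    case False then have "k = 3" using assms by auto
    then show ?thesis using assms(1) unfolding C3_def by auto
  qed
  have "compact ((deriv^^k) U ` cball 0 \<bar>R\<bar>)"
    by (rule compact_continuous_image) (use cont continuous_on_subset in auto)
  then obtain B where B: "\<And>y. y \<in> (deriv^^k) U ` cball 0 \<bar>R\<bar> \<Longrightarrow> norm y \<le> B"
    using compact_imp_bounded bounded_iff by metis
  have "\<bar>(deriv^^k) U r\<bar> \<le> max B 0" for r
  proof (cases "R < \<bar>r\<bar>")
    case True then show ?thesis using Z assms by auto
  next
    case False then have "r \<in> cball 0 \<bar>R\<bar>" by auto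
    then show ?thesis using B[of "(deriv^^k) U r"] by auto
  qed
  then show ?thesis by blast
qed

lemma C3_der: "C3 U \<Longrightarrow> k < 3 \<Longrightarrow> DERIV ((deriv^^k) U) r :> (deriv^^Suc k) U r"
  unfolding C3_def by blast

lemma D1_a_zero:
  assumes "C3 U" "a > 0" "\<And>r. r \<ge> 0 \<Longrightarrow> U a \<le> U r"
  shows "deriv U a = 0"
proof -
  have der: "DERIV U a :> deriv U a" proof -
    show ?thesis using C3_der[OF assms(1), of 0] by simp
  qed
  show ?thesis by (rule DERIV_local_min[OF der assms(2)]) (use assms(3) in auto)
qed

lemma b_facts:
  assumes "C3 U" "compact_supp U" "a > 0"
    and "\<And>r. r \<ge> 0 \<Longrightarrow> U a \<le> U r"
    and "\<And>r. r \<ge> 0 \<Longrightarrow> U r = U a \<Longrightarrow> r = a"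
  shows "range_b U \<ge> 0" "\<And>s. s > range_b U \<Longrightarrow> U s = 0"
    "\<And>s. s > range_b U \<Longrightarrow> deriv U s = 0" "range_b U \<ge> a"
proof -
  obtain R where R: "\<And>r. R < \<bar>r\<bar> \<Longrightarrow> U r = 0" using assms(2) unfolding compact_supp_def by auto
  define S where "S = {r. 0 < r \<and> (\<forall>s>r. U s = 0)}"
  have ne: "S \<noteq> {}" using R unfolding S_def
    by (intro ex_in_conv[THEN iffD1] exI[of _ "\<bar>R\<bar> + 1"]) auto
  have bb: "bdd_below S" unfolding S_def bdd_below_def by (rule exI[of _ 0]) auto
  have bdef: "range_b U = Inf S" unfolding range_b_def S_def ..
  show "range_b U \<ge> 0" unfolding bdef by (rule cInf_greatest[OF ne]) (auto simp: S_def)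
  show z: "U s = 0" if "s > range_b U" for s
  proof -
    have "Inf S < s" using that bdef by simp
    then obtain r where "r \<in> S" "r < s" using cInf_less_iff[OF ne bb] by auto
    then show ?thesis unfolding S_def by auto
  qed
  show "deriv U s = 0" if "s > range_b U" for s
  proof -
    have der: "DERIV U s :> deriv U s" proof -
    show ?thesis using C3_der[OF assms(1), of 0] by simp
  qed
    show ?thesis by (rule DERIV_local_const[OF der, of "s - range_b U"]) (use that z in auto)
  qed
  show "range_b U \<ge> a"
  proof (rule ccontr)
    assume "\<not> range_b U \<ge> a"
    then have "U a = 0" using z by auto
    moreover have "U (\<bar>R\<bar> + a + 1) = 0" using R assms(3) by auto
    ultimately have "\<bar>R\<bar> + a + 1 = a" using assms(5)[of "\<bar>R\<bar> + a + 1"] assms(3) by auto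
    then show False by auto
  qed
qed

lemma geo1:
  fixes d e :: "'a::real_normed_vector"
  assumes "norm d = a"
  shows "\<bar>norm (d + e) - a\<bar> \<le> norm e"
  using assms norm_triangle_ineq[of d e] norm_triangle_ineq[of "d+e" "-e"] by auto

lemma geo2:
  fixes d e :: "'a::real_inner"
  assumes "norm d = a" "a > 0"
  shows "\<bar>norm (d + e) - a - inner e d / a\<bar> \<le> 2 * (norm e)^2 / a"
proof -
  define r where "r = norm (d + e)"
  have r0: "r \<ge> 0" unfolding r_def by simp
  have sq: "r^2 = a^2 + 2 * inner e d + (norm e)^2"
  proof -
    have dd: "inner d d = a^2" using assms(1) by (simp add: power2_norm_eq_inner[symmetric])
    have "r^2 = inner (d+e) (d+e)" unfolding r_def by (simp add: power2_norm_eq_inner)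
    also have "\<dots> = inner d d + 2 * inner e d + inner e e" by (simp add: inner_add_left inner_add_right inner_commute)
    finally show ?thesis using dd by (simp add: power2_norm_eq_inner)
  qed
  have ra: "r + a > 0" using r0 assms by auto
  have "(r - a) * (r + a) = 2 * inner e d + (norm e)^2" using sq by (simp add: algebra_simps power2_eq_square)
  then have ra_eq: "r - a = (2 * inner e d + (norm e)^2) / (r + a)"
    using ra by (simp add: eq_divide_eq)
  have "r - a - inner e d / a = ((2 * inner e d + (norm e)^2) * a - inner e d * (r + a)) / ((r + a) * a)"
    unfolding ra_eq using ra assms(2) by (simp add: diff_frac_eq)
  also have "(2 * inner e d + (norm e)^2) * a - inner e d * (r + a) = (a - r) * inner e d + a * (norm e)^2"
    by (simp add: algebra_simps)
  finally have eq: "r - a - inner e d / a = ((a - r) * inner e d + a * (norm e)^2) / (a * (r + a))"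
    by (simp add: mult.commute)
  have ar: "\<bar>a - r\<bar> \<le> norm e" using geo1[OF assms(1), of e] unfolding r_def by auto
  have ed: "\<bar>inner e d\<bar> \<le> norm e * a" using Cauchy_Schwarz_ineq2[of e d] assms(1) by simp
  have "\<bar>(a - r) * inner e d\<bar> \<le> norm e * (norm e * a)"
    unfolding abs_mult by (rule mult_mono[OF ar ed]) auto
  then have num: "\<bar>(a - r) * inner e d + a * (norm e)^2\<bar> \<le> 2 * a * (norm e)^2"
    using assms(2) by (simp add: power2_eq_square algebra_simps abs_triangle_ineq)
  have den: "a * (r + a) \<ge> a * a" using r0 assms(2) by auto
  have "\<bar>r - a - inner e d / a\<bar> = \<bar>(a - r) * inner e d + a * (norm e)^2\<bar> / (a * (r + a))"
    using eq ra assms(2) by (simp add: abs_divide)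
  also have "\<dots> \<le> 2 * a * (norm e)^2 / (a * a)"
    by (rule frac_le) (use num den assms(2) in auto)
  also have "\<dots> = 2 * (norm e)^2 / a" using assms(2) by simp
  finally show ?thesis unfolding r_def .
qed

lemma geo3:
  fixes d e :: "'a::real_inner"
  assumes "norm d = a" "a > 0"
  shows "\<bar>(norm (d + e) - a)^2 - (inner e d / a)^2\<bar> \<le> 4 * (norm e)^3 / a"
proof -
  define p where "p = norm (d + e) - a"
  define q where "q = inner e d / a"
  have pq: "\<bar>p - q\<bar> \<le> 2 * (norm e)^2 / a" using geo2[OF assms] unfolding p_def q_def by simp
  have p: "\<bar>p\<bar> \<le> norm e" using geo1[OF assms(1)] unfolding p_def by simp
  have q: "\<bar>q\<bar> \<le> norm e" unfolding q_def using Cauchy_Schwarz_ineq2[of e d] assms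
    by (simp add: abs_divide divide_le_eq)
  have "\<bar>p^2 - q^2\<bar> = \<bar>p - q\<bar> * \<bar>p + q\<bar>" by (simp add: power2_eq_square algebra_simps abs_mult[symmetric])
  also have "\<dots> \<le> (2 * (norm e)^2 / a) * (2 * norm e)"
    by (rule mult_mono[OF pq]) (use p q assms in auto)
  also have "\<dots> = 4 * (norm e)^3 / a" by (simp add: power2_eq_square power3_eq_cube)
  finally show ?thesis unfolding p_def q_def .
qed

lemma geo4:
  fixes d e :: "'a::real_normed_vector"
  assumes "norm d = a" "a > 0" "norm (d + e) \<ge> a0" "a0 > 0"
  shows "norm ((1 / norm (d + e)) *\<^sub>R (d + e) - (1 / a) *\<^sub>R d) \<le> 2 * norm e / a0"
proof -
  define r where "r = norm (d + e)"
  have r: "r > 0" "r \<ge> a0" using assms unfolding r_def by auto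
  have "(1 / r) *\<^sub>R (d + e) - (1 / a) *\<^sub>R d = (1 / (r * a)) *\<^sub>R (a *\<^sub>R e + (a - r) *\<^sub>R d)"
    using r assms(2) by (simp add: algebra_simps scaleR_diff_left)
  then have "norm ((1 / r) *\<^sub>R (d + e) - (1 / a) *\<^sub>R d) = norm (a *\<^sub>R e + (a - r) *\<^sub>R d) / (r * a)"
    using r assms(2) by simp
  also have "\<dots> \<le> (a * norm e + norm e * a) / (r * a)"
  proof (rule divide_right_mono)
    have "norm (a *\<^sub>R e + (a - r) *\<^sub>R d) \<le> norm (a *\<^sub>R e) + norm ((a - r) *\<^sub>R d)" by (rule norm_triangle_ineq)
    also have "\<dots> = a * norm e + \<bar>a - r\<bar> * a" using assms(1,2) by simp
    also have "\<dots> \<le> a * norm e + norm e * a"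
      using geo1[OF assms(1), of e] assms(2) unfolding r_def by (simp add: mult_right_mono abs_minus_commute)
    finally show "norm (a *\<^sub>R e + (a - r) *\<^sub>R d) \<le> a * norm e + norm e * a" .
  qed (use r assms in auto)
  also have "\<dots> = 2 * norm e / r" using assms(2) r by (simp add: field_simps)
  also have "\<dots> \<le> 2 * norm e / a0" by (rule divide_left_mono) (use r assms in auto)
  finally show ?thesis unfolding r_def .
qed

lemma H_point:
  fixes d e :: "'a::real_inner"
  assumes "C3 U" "a > 0" "deriv U a = 0" "\<And>r. \<bar>(deriv^^3) U r\<bar> \<le> M3" "norm d = a"
  shows "\<bar>U (norm (d + e)) - U (norm d) - 1/2 * (deriv (deriv U) a / a\<^sup>2 * (inner e d)\<^sup>2)\<bar>
     \<le> (M3 / 6 + 2 * \<bar>deriv (deriv U) a\<bar> / a) * (norm e)^3"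
proof -
  define r where "r = norm (d + e)"
  define c where "c = deriv (deriv U) a"
  obtain t where t: "(deriv^^0) U r = (\<Sum>m<3. (deriv^^(0+m)) U a / fact m * (r-a)^m)
           + (deriv^^(0+3)) U t / fact 3 * (r-a)^3"
    using taylor_D[OF assms(1), of 3 0 r a] by auto
  have "(\<Sum>m<3. (deriv^^(0+m)) U a / fact m * (r-a)^m) = U a + c / 2 * (r-a)^2"
    using assms(3) by (simp add: numeral_3_eq_3 c_def numeral_2_eq_2)
  then have Ur: "U r = U a + c / 2 * (r-a)^2 + (deriv^^3) U t / 6 * (r-a)^3"
    using t by (simp add: numeral_3_eq_3)
  have "U r - U a - 1/2 * (c / a\<^sup>2 * (inner e d)\<^sup>2)
      = c / 2 * ((r-a)^2 - (inner e d / a)^2) + (deriv^^3) U t / 6 * (r-a)^3"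
    unfolding Ur by (simp add: power_divide algebra_simps)
  also have "\<bar>\<dots>\<bar> \<le> \<bar>c\<bar> / 2 * (4 * (norm e)^3 / a) + M3 / 6 * (norm e)^3"
  proof -
    have 1: "\<bar>c / 2 * ((r-a)^2 - (inner e d / a)^2)\<bar> \<le> \<bar>c\<bar> / 2 * (4 * (norm e)^3 / a)"
    proof -
      have "\<bar>c\<bar> * \<bar>(r-a)^2 - (inner e d / a)^2\<bar> \<le> \<bar>c\<bar> * (4 * (norm e)^3 / a)"
        by (rule mult_left_mono) (use geo3[OF assms(5,2), of e] r_def in auto)
      then show ?thesis by (simp add: abs_mult mult.left_commute)
    qed
    have ra: "\<bar>r - a\<bar>^3 \<le> (norm e)^3" using geo1[OF assms(5), of e] unfolding r_def
      by (simp add: power_mono)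
    have 2: "\<bar>(deriv^^3) U t / 6 * (r-a)^3\<bar> \<le> M3 / 6 * (norm e)^3"
    proof -
      have "\<bar>(deriv^^3) U t / 6 * (r-a)^3\<bar> = \<bar>(deriv^^3) U t\<bar> / 6 * \<bar>r - a\<bar>^3"
        by (simp add: abs_mult power_abs)
      also have "\<dots> \<le> M3 / 6 * (norm e)^3"
        by (rule mult_mono) (use assms(4)[of t] ra in auto)
      finally show ?thesis .
    qed
    show ?thesis using 1 2 by linarith
  qed
  also have "\<dots> = (M3 / 6 + 2 * \<bar>c\<bar> / a) * (norm e)^3" by (simp add: algebra_simps)
  finally show ?thesis unfolding r_def c_def assms(5) .
qed

lemma G_point:
  fixes d e :: "'a::real_inner"
  assumes "C3 U" "a > 0" "deriv U a = 0" "\<And>r. \<bar>(deriv^^2) U r\<bar> \<le> M2"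
    "\<And>r. \<bar>(deriv^^3) U r\<bar> \<le> M3" "norm d = a" "norm (d + e) \<ge> a0" "a0 > 0"
  defines "c \<equiv> deriv (deriv U) a"
  defines "F \<equiv> (deriv U (norm (d + e)) / norm (d + e)) *\<^sub>R (d + e)"
  defines "L \<equiv> (c / a\<^sup>2 * inner e d) *\<^sub>R d"
  shows "norm F \<le> M2 * norm e" "norm L \<le> \<bar>c\<bar> * norm e"
    "norm (F - L) \<le> (M3 / 2 + 2 * \<bar>c\<bar> / a + 2 * \<bar>c\<bar> / a0) * (norm e)\<^sup>2"
proof -
  define r where "r = norm (d + e)"
  have r: "r > 0" "r \<ge> a0" using assms unfolding r_def by auto
  have ra: "\<bar>r - a\<bar> \<le> norm e" using geo1[OF assms(6), of e] unfolding r_def by simp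
  have ed: "\<bar>inner e d\<bar> \<le> norm e * a" using Cauchy_Schwarz_ineq2[of e d] assms(6) by simp
  define u where "u = (1 / r) *\<^sub>R (d + e)"
  have nu: "norm u = 1" unfolding u_def using r unfolding r_def by simp
  have Fu: "F = deriv U r *\<^sub>R u" unfolding F_def u_def r_def by simp
  obtain t1 where t1: "(deriv^^1) U r = (\<Sum>m<1. (deriv^^(1+m)) U a / fact m * (r-a)^m)
           + (deriv^^(1+1)) U t1 / fact 1 * (r-a)^1"
    using taylor_D[OF assms(1), of 1 1 r a] by auto
  then have D1r: "deriv U r = (deriv^^2) U t1 * (r - a)" using assms(3) by (simp add: numeral_2_eq_2)
  show "norm F \<le> M2 * norm e"
  proof -
    have "norm F = \<bar>(deriv^^2) U t1\<bar> * \<bar>r - a\<bar>" unfolding Fu D1r using nu by (simp add: abs_mult)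
    also have "\<dots> \<le> M2 * norm e" by (rule mult_mono) (use assms(4)[of t1] ra in auto)
    finally show ?thesis .
  qed
  show "norm L \<le> \<bar>c\<bar> * norm e"
  proof -
    have "norm L = \<bar>c\<bar> / a\<^sup>2 * \<bar>inner e d\<bar> * a" unfolding L_def using assms(6) by (simp add: abs_mult)
    also have "\<dots> \<le> \<bar>c\<bar> / a\<^sup>2 * (norm e * a) * a"
      by (intro mult_right_mono mult_left_mono ed) (use assms(2) in auto)
    also have "\<dots> = \<bar>c\<bar> * norm e" using assms(2) by (simp add: power2_eq_square)
    finally show ?thesis .
  qed
  obtain t2 where t2: "(deriv^^1) U r = (\<Sum>m<2. (deriv^^(1+m)) U a / fact m * (r-a)^m)
           + (deriv^^(1+2)) U t2 / fact 2 * (r-a)^2"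
    using taylor_D[OF assms(1), of 2 1 r a] by auto
  define \<rho> where "\<rho> = (deriv^^3) U t2 / 2 * (r-a)^2"
  have D1r2: "deriv U r = c * (r - a) + \<rho>" using t2 assms(3)
    by (simp add: numeral_2_eq_2 numeral_3_eq_3 c_def \<rho>_def)
  define \<delta> where "\<delta> = r - a - inner e d / a"
  define \<eta> where "\<eta> = u - (1 / a) *\<^sub>R d"
  have "F - L = \<rho> *\<^sub>R u + (c * \<delta>) *\<^sub>R u + (c * inner e d / a) *\<^sub>R \<eta>"
  proof -
    have "F = (\<rho> + c * \<delta> + c * inner e d / a) *\<^sub>R u" unfolding Fu D1r2 \<delta>_def by (simp add: algebra_simps)
    also have "\<dots> = \<rho> *\<^sub>R u + (c * \<delta>) *\<^sub>R u + (c * inner e d / a) *\<^sub>R u" by (simp add: scaleR_add_left)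
    also have "(c * inner e d / a) *\<^sub>R u = (c * inner e d / a) *\<^sub>R \<eta> + L"
      unfolding \<eta>_def L_def using assms(2) by (simp add: scaleR_diff_right power2_eq_square)
    finally show ?thesis by simp
  qed
  then have "norm (F - L) \<le> norm (\<rho> *\<^sub>R u) + norm ((c * \<delta>) *\<^sub>R u) + norm ((c * inner e d / a) *\<^sub>R \<eta>)"
    by (metis norm_triangle_ineq order_trans add_right_mono)
  also have "\<dots> = \<bar>\<rho>\<bar> + \<bar>c\<bar> * \<bar>\<delta>\<bar> + \<bar>c\<bar> * \<bar>inner e d\<bar> / a * norm \<eta>"
    using nu assms(2) by (simp add: abs_mult)
  also have "\<dots> \<le> M3 / 2 * (norm e)\<^sup>2 + \<bar>c\<bar> * (2 * (norm e)\<^sup>2 / a) + \<bar>c\<bar> * (norm e * a) / a * (2 * norm e / a0)"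
  proof -
    have 1: "\<bar>\<rho>\<bar> \<le> M3 / 2 * (norm e)\<^sup>2"
    proof -
      have "\<bar>\<rho>\<bar> = \<bar>(deriv^^3) U t2\<bar> / 2 * \<bar>r - a\<bar>^2" unfolding \<rho>_def by (simp add: abs_mult power_abs)
      also have "\<dots> \<le> M3 / 2 * (norm e)\<^sup>2"
        by (rule mult_mono) (use assms(5)[of t2] power_mono[OF ra abs_ge_zero, of 2] in auto)
      finally show ?thesis .
    qed
    have 2: "\<bar>c\<bar> * \<bar>\<delta>\<bar> \<le> \<bar>c\<bar> * (2 * (norm e)\<^sup>2 / a)"
      by (rule mult_left_mono) (use geo2[OF assms(6,2), of e] \<delta>_def r_def in auto)
    have en: "norm \<eta> \<le> 2 * norm e / a0" using geo4[OF assms(6,2,7,8)] unfolding \<eta>_def u_def r_def .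
    have 3: "\<bar>c\<bar> * \<bar>inner e d\<bar> / a * norm \<eta> \<le> \<bar>c\<bar> * (norm e * a) / a * (2 * norm e / a0)"
      by (intro mult_mono divide_right_mono mult_left_mono ed en) (use assms(2) in auto)
    show ?thesis using 1 2 3 by linarith
  qed
  also have "\<dots> = (M3 / 2 + 2 * \<bar>c\<bar> / a + 2 * \<bar>c\<bar> / a0) * (norm e)\<^sup>2"
    using assms(2) by (simp add: power2_eq_square field_simps)
  finally show "norm (F - L) \<le> (M3 / 2 + 2 * \<bar>c\<bar> / a + 2 * \<bar>c\<bar> / a0) * (norm e)\<^sup>2" .
qed

lemma GDERIV_sum:
  assumes "finite A" "\<And>a. a \<in> A \<Longrightarrow> GDERIV (f a) x :> Df a"
  shows "GDERIV (\<lambda>y. \<Sum>a\<in>A. f a y) x :> (\<Sum>a\<in>A. Df a)"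
  using assms unfolding gderiv_def inner_sum_right by (intro has_derivative_sum) auto

lemma GDERIV_unique:
  assumes "GDERIV f x :> D1" "GDERIV f x :> D2"
  shows "D1 = D2"
proof -
  have "(\<lambda>h. inner h D1) = (\<lambda>h. inner h D2)"
    using has_derivative_unique assms unfolding gderiv_def by blast
  then have "inner (D1 - D2) D1 = inner (D1 - D2) D2" by metis
  then have "inner (D1 - D2) (D1 - D2) = 0" by (simp add: inner_diff_right)
  then show ?thesis by simp
qed

lemma GDERIV_term:
  fixes v x0 :: "'a::real_inner"
  assumes "C3 U" "v \<noteq> 0"
  shows "GDERIV (\<lambda>y. U (norm (v + s *\<^sub>R (y - x0)))) x0 :> (deriv U (norm v) * s) *\<^sub>R sgn v"
proof -
  have g: "((\<lambda>y. v + s *\<^sub>R (y - x0)) has_derivative (\<lambda>h. s *\<^sub>R h)) (at x0)"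
    by (auto intro!: derivative_eq_intros)
  have n: "(norm has_derivative (\<lambda>k. inner k (sgn v))) (at (v + s *\<^sub>R (x0 - x0)))"
    using has_derivative_norm[OF assms(2)] by simp
  have "((\<lambda>y. norm (v + s *\<^sub>R (y - x0))) has_derivative (\<lambda>h. inner (s *\<^sub>R h) (sgn v))) (at x0)"
    using has_derivative_compose[OF g n] by simp
  moreover have "(\<lambda>h. inner (s *\<^sub>R h) (sgn v)) = (\<lambda>h. inner h (s *\<^sub>R sgn v))" by auto
  ultimately have "GDERIV (\<lambda>y. norm (v + s *\<^sub>R (y - x0))) x0 :> s *\<^sub>R sgn v"
    unfolding gderiv_def by simp
  moreover have "DERIV U (norm (v + s *\<^sub>R (x0 - x0))) :> deriv U (norm v)"
    using C3_der[OF assms(1), of 0] by simp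
  ultimately show ?thesis using GDERIV_DERIV_compose by fastforce
qed

lemma grad_formula:
  fixes x :: "nat \<Rightarrow> 'a::real_inner"
  assumes "C3 U" "i < N" "\<And>k j. k < N \<Longrightarrow> j < N \<Longrightarrow> k \<noteq> j \<Longrightarrow> x k \<noteq> x j"
  shows "grad_i U N x i = (\<Sum>j\<in>{..<N}-{i}. (deriv U (norm (x i - x j)) / norm (x i - x j)) *\<^sub>R (x i - x j))"
proof -
  define W where "W k j = (deriv U (norm (x k - x j)) / norm (x k - x j)) *\<^sub>R (x k - x j)" for k j
  define \<sigma> where "\<sigma> k j = (if k = i then 1 else 0) - (if j = i then 1 else (0::real))" for k j
  have upd: "(x(i:=y)) k - (x(i:=y)) j = (x k - x j) + \<sigma> k j *\<^sub>R (y - x i)" for k j y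
    unfolding \<sigma>_def by (cases "k = i"; cases "j = i") (auto simp: algebra_simps)
  have Hen_eq: "(\<lambda>y. Hen U N (x(i:=y))) = (\<lambda>y. \<Sum>j<N. \<Sum>k<j. U (norm ((x k - x j) + \<sigma> k j *\<^sub>R (y - x i))))"
    unfolding Hen_def upd ..
  have gd: "GDERIV (\<lambda>y. Hen U N (x(i:=y))) (x i) :>
     (\<Sum>j<N. \<Sum>k<j. (deriv U (norm (x k - x j)) * \<sigma> k j) *\<^sub>R sgn (x k - x j))"
    unfolding Hen_eq
    by (intro GDERIV_sum GDERIV_term assms(1)) (use assms(3) in auto)
  have Wanti: "W j k = - W k j" for j k
    unfolding W_def by (simp add: norm_minus_commute scaleR_right_diff_distrib)
  have term_eq: "(deriv U (norm (x k - x j)) * \<sigma> k j) *\<^sub>R sgn (x k - x j)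
      = (if k = i then W i j else 0) + (if j = i then W i k else 0)" if "k < j" for k j
  proof -
    have "(deriv U (norm (x k - x j)) * \<sigma> k j) *\<^sub>R sgn (x k - x j) = \<sigma> k j *\<^sub>R W k j"
      unfolding W_def sgn_div_norm by (simp add: divide_inverse)
    then show ?thesis using that Wanti[of i k] unfolding \<sigma>_def by auto
  qed
  have "(\<Sum>j<N. \<Sum>k<j. (deriv U (norm (x k - x j)) * \<sigma> k j) *\<^sub>R sgn (x k - x j))
      = (\<Sum>j<N. \<Sum>k<j. (if k = i then W i j else 0)) + (\<Sum>j<N. \<Sum>k<j. (if j = i then W i k else 0))"
    by (simp add: term_eq sum.distrib)
  also have "(\<Sum>j<N. \<Sum>k<j. (if k = i then W i j else 0)) = (\<Sum>j<N. if i < j then W i j else 0)"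
    by (simp add: sum.delta)
  also have "\<dots> = (\<Sum>j\<in>{i<..<N}. W i j)"
    by (simp add: sum.If_cases) (rule sum.cong, auto)
  also have "(\<Sum>j<N. \<Sum>k<j. (if j = i then W i k else 0)) = (\<Sum>k<i. W i k)"
  proof -
    have "(\<Sum>j<N. \<Sum>k<j. (if j = i then W i k else 0)) = (\<Sum>j<N. if j = i then (\<Sum>k<i. W i k) else 0)"
      by (rule sum.cong) auto
    also have "\<dots> = (\<Sum>k<i. W i k)" using assms(2) by (simp add: sum.delta)
    finally show ?thesis .
  qed
  also have "(\<Sum>j\<in>{i<..<N}. W i j) + (\<Sum>k<i. W i k) = (\<Sum>j\<in>{..<N}-{i}. W i j)"
  proof -
    have "{..<N}-{i} = {..<i} \<union> {i<..<N}" using assms(2) by auto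
    moreover have "sum (W i) ({..<i} \<union> {i<..<N}) = sum (W i) {..<i} + sum (W i) {i<..<N}"
      by (rule sum.union_disjoint) auto
    ultimately show ?thesis by (simp add: add.commute)
  qed
  finally have gd2: "GDERIV (\<lambda>y. Hen U N (x(i:=y))) (x i) :> (\<Sum>j\<in>{..<N}-{i}. W i j)"
    using gd by simp
  show ?thesis
    unfolding grad_i_def W_def[symmetric]
  proof (rule the_equality)
    show "GDERIV (\<lambda>y. Hen U N (x(i := y))) (x i) :> sum (W i) ({..<N} - {i})" using gd2 by simp
  next
    fix D assume "GDERIV (\<lambda>y. Hen U N (x(i := y))) (x i) :> D"
    then show "D = sum (W i) ({..<N} - {i})" using GDERIV_unique gd2 by (metis fun_upd_triv)
  qed
qed

lemma sum_pairs:
  "(\<Sum>j<N. \<Sum>i<j. f i j) = (\<Sum>(i,j)\<in>{(i,j). i<j \<and> j<(N::nat)}. f i j)"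
proof -
  have "(\<Sum>j<N. \<Sum>i<j. f i j) = (\<Sum>(j,i)\<in>(SIGMA j:{..<N}. {..<j}). f i j)"
    by (rule sum.Sigma) auto
  also have "\<dots> = (\<Sum>q\<in>(SIGMA j:{..<N}. {..<j}). (case_prod f) (prod.swap q))"
    by (rule sum.cong) auto
  also have "\<dots> = (\<Sum>q\<in>prod.swap ` (SIGMA j:{..<N}. {..<j}). (case_prod f) q)"
    by (subst sum.reindex) (auto simp: comp_def)
  also have "prod.swap ` (SIGMA j:{..<N}. {..<j}) = {(i,j). i<j \<and> j<N}"
    by (auto simp: image_iff)
  finally show ?thesis by simp
qed

lemma nbr_sym: "nbr a z i j = nbr a z j i"
  unfolding nbr_def by (auto simp: norm_minus_commute)

lemma sum_sym:
  fixes g :: "nat \<Rightarrow> nat \<Rightarrow> real"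
  assumes "\<And>i j. g i j = g j i"
  shows "(\<Sum>i<N. \<Sum>j\<in>{j. j<N \<and> nbr a z i j}. g i j) = 2 * (\<Sum>(i,j)\<in>nbr_pairs a N z. g i j)"
proof -
  define NP where "NP = nbr_pairs a N z"
  have fin: "finite NP" unfolding NP_def nbr_pairs_def
    by (rule finite_subset[of _ "{..<N} \<times> {..<N}"]) auto
  have "(\<Sum>i<N. \<Sum>j\<in>{j. j<N \<and> nbr a z i j}. g i j) = (\<Sum>(i,j)\<in>(SIGMA i:{..<N}. {j. j<N \<and> nbr a z i j}). g i j)"
    by (rule sum.Sigma) auto
  also have "(SIGMA i:{..<N}. {j. j<N \<and> nbr a z i j}) = NP \<union> prod.swap ` NP"
  proof (rule set_eqI)
    fix q :: "nat \<times> nat"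
    obtain i j where q: "q = (i, j)" by fastforce
    have "q \<in> (SIGMA i:{..<N}. {j. j<N \<and> nbr a z i j}) \<longleftrightarrow> i < N \<and> j < N \<and> nbr a z i j" using q by simp
    also have "\<dots> \<longleftrightarrow> (i,j) \<in> NP \<or> (j,i) \<in> NP"
      unfolding NP_def nbr_pairs_def using nbr_sym[of a z i j] by (auto simp: nbr_def)
    also have "\<dots> \<longleftrightarrow> q \<in> NP \<union> prod.swap ` NP"
    proof -
      have "(i,j) \<in> prod.swap ` NP \<longleftrightarrow> (j,i) \<in> NP"
      proof
        assume "(j,i) \<in> NP" then show "(i,j) \<in> prod.swap ` NP" by (rule rev_image_eqI) simp
      next
        assume "(i,j) \<in> prod.swap ` NP" then show "(j,i) \<in> NP" by auto
      qed
      then show ?thesis using q by auto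
    qed
    finally show "q \<in> (SIGMA i:{..<N}. {j. j<N \<and> nbr a z i j}) \<longleftrightarrow> q \<in> NP \<union> prod.swap ` NP" .
  qed
  also have "(\<Sum>(i,j)\<in>NP \<union> prod.swap ` NP. g i j) = (\<Sum>(i,j)\<in>NP. g i j) + (\<Sum>(i,j)\<in>prod.swap ` NP. g i j)"
  proof (rule sum.union_disjoint)
    show "finite NP" by (rule fin)
    show "finite (prod.swap ` NP)" using fin by (rule finite_imageI)
    show "NP \<inter> prod.swap ` NP = {}" unfolding NP_def nbr_pairs_def by auto
  qed
  also have "(\<Sum>(i,j)\<in>prod.swap ` NP. g i j) = (\<Sum>(i,j)\<in>NP. g i j)"
  proof -
    have "(\<Sum>(i,j)\<in>prod.swap ` NP. g i j) = (\<Sum>q\<in>NP. (case_prod g) (prod.swap q))"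
      by (subst sum.reindex) (auto simp: comp_def)
    also have "\<dots> = (\<Sum>(i,j)\<in>NP. g i j)"
    proof (rule sum.cong[OF refl])
      fix q assume "q \<in> NP"
      obtain i j where q: "q = (i, j)" by fastforce
      show "(case_prod g) (prod.swap q) = (case q of (i, j) \<Rightarrow> g i j)" using q assms[of j i] by simp
    qed
    finally show ?thesis .
  qed
  finally show ?thesis unfolding NP_def by simp
qed

lemma deg_bound:
  assumes "a > 0" "range_b U \<ge> a"
  shows "\<exists>K. \<forall>N (z::nat \<Rightarrow> 'a::euclidean_space) i. crystal U a N z \<longrightarrow> card {j. j<N \<and> nbr a z i j} \<le> K"
proof -
  have "compact (sphere (0::'a) a)" by simp
  then have "\<forall>e>0. \<exists>k. finite k \<and> sphere (0::'a) a \<subseteq> (\<Union>x\<in>k. ball x e)"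
    unfolding compact_eq_totally_bounded by blast
  then obtain k where k: "finite k" "sphere (0::'a) a \<subseteq> (\<Union>x\<in>k. ball x (a/2))"
    using assms(1) half_gt_zero by blast
  have "card {j. j<N \<and> nbr a z i j} \<le> card k" if cr: "crystal U a N z" for N and z :: "nat \<Rightarrow> 'a" and i
  proof -
    define Nb where "Nb = {j. j<N \<and> nbr a z i j}"
    define f where "f j = (SOME p. p \<in> k \<and> z j - z i \<in> ball p (a/2))" for j
    have fj: "f j \<in> k \<and> z j - z i \<in> ball (f j) (a/2)" if "j \<in> Nb" for j
    proof -
      have "z j - z i \<in> sphere 0 a" using that unfolding Nb_def nbr_def by (simp add: norm_minus_commute)
      then have "\<exists>p. p \<in> k \<and> z j - z i \<in> ball p (a/2)" using k by blast
      then show ?thesis unfolding f_def by (rule someI_ex)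
    qed
    have "inj_on f Nb"
    proof (rule inj_onI)
      fix j j' assume jj: "j \<in> Nb" "j' \<in> Nb" "f j = f j'"
      show "j = j'"
      proof (rule ccontr)
        assume ne: "j \<noteq> j'"
        have "dist (z j - z i) (z j' - z i) < a"
        proof -
          have "dist (f j) (z j - z i) < a/2" "dist (f j) (z j' - z i) < a/2"
            using fj[OF jj(1)] fj[OF jj(2)] jj(3) by auto
          moreover have "dist (z j - z i) (z j' - z i) \<le> dist (f j) (z j - z i) + dist (f j) (z j' - z i)"
            by (rule dist_triangle3)
          ultimately show ?thesis by linarith
        qed
        then have "norm (z j - z j') < a" by (simp add: dist_norm)
        moreover have "norm (z j - z j') = a \<or> norm (z j - z j') > range_b U"
          using cr jj ne unfolding crystal_def Nb_def by auto
        ultimately show False using assms(2) by auto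
      qed
    qed
    moreover have "f ` Nb \<subseteq> k" using fj by auto
    ultimately show ?thesis using card_inj_on_le k(1) unfolding Nb_def by blast
  qed
  then show ?thesis by blast
qed

lemma cube_ineq: fixes x y :: real assumes "x \<ge> 0" "y \<ge> 0" shows "x^2 * y \<le> x^3 + y^3"
proof (cases "x \<le> y")
  case True
  have "x^2 * y \<le> y^2 * y" by (rule mult_right_mono) (use True assms power_mono in auto)
  moreover have "y^2 * y = y^3" by (simp add: power3_eq_cube power2_eq_square)
  moreover have "0 \<le> x^3" using assms by simp
  ultimately show ?thesis by linarith
next
  case False
  have "x^2 * y \<le> x^2 * x" by (rule mult_left_mono) (use False assms in auto)
  moreover have "x^2 * x = x^3" by (simp add: power3_eq_cube power2_eq_square)
  moreover have "0 \<le> y^3" using assms by simp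
  ultimately show ?thesis by linarith
qed

lemma prod_sum_bound:
  fixes e :: "nat \<Rightarrow> real"
  assumes "finite J" "\<And>j. e j \<ge> 0"
  shows "(\<Sum>j\<in>J. (e j)^2) * (\<Sum>k\<in>J. e k) \<le> 2 * card J * (\<Sum>j\<in>J. (e j)^3)"
proof -
  have "(\<Sum>j\<in>J. (e j)^2) * (\<Sum>k\<in>J. e k) = (\<Sum>j\<in>J. \<Sum>k\<in>J. (e j)^2 * e k)"
    by (simp add: sum_product)
  also have "\<dots> \<le> (\<Sum>j\<in>J. \<Sum>k\<in>J. (e j)^3 + (e k)^3)"
    by (intro sum_mono cube_ineq assms)
  also have "\<dots> = 2 * card J * (\<Sum>j\<in>J. (e j)^3)"
    by (simp add: sum.distrib sum_distrib_left[symmetric] sum.swap[of _ J J] algebra_simps)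
  finally show ?thesis .
qed

lemma per_i_bound:
  fixes F L :: "nat \<Rightarrow> 'a::real_normed_vector"
  assumes "finite J" "card J \<le> K" "\<And>j. j \<in> J \<Longrightarrow> norm (F j - L j) \<le> K1 * (e j)^2"
    "\<And>j. j \<in> J \<Longrightarrow> norm (F j) + norm (L j) \<le> K2 * e j" "\<And>j. e j \<ge> 0" "K1 \<ge> 0" "K2 \<ge> 0"
  shows "\<bar>(norm (\<Sum>j\<in>J. F j))^2 - (norm (\<Sum>j\<in>J. L j))^2\<bar> \<le> 2 * K1 * K2 * K * (\<Sum>j\<in>J. (e j)^3)"
proof -
  define A where "A = (\<Sum>j\<in>J. F j)"
  define B where "B = (\<Sum>j\<in>J. L j)"
  have "\<bar>(norm A)^2 - (norm B)^2\<bar> = \<bar>norm A - norm B\<bar> * (norm A + norm B)"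
  proof -
    have "(norm A)^2 - (norm B)^2 = (norm A - norm B) * (norm A + norm B)" by (simp add: power2_eq_square algebra_simps)
    then show ?thesis by (simp add: abs_mult)
  qed
  also have "\<dots> \<le> norm (A - B) * (norm A + norm B)"
    by (rule mult_right_mono) (auto simp: norm_triangle_ineq3)
  also have "\<dots> \<le> (K1 * (\<Sum>j\<in>J. (e j)^2)) * (K2 * (\<Sum>k\<in>J. e k))"
  proof (rule mult_mono)
    have "norm (A - B) = norm (\<Sum>j\<in>J. F j - L j)" unfolding A_def B_def by (simp add: sum_subtractf)
    also have "\<dots> \<le> (\<Sum>j\<in>J. norm (F j - L j))" by (rule norm_sum)
    also have "\<dots> \<le> (\<Sum>j\<in>J. K1 * (e j)^2)" by (rule sum_mono) (rule assms(3))
    finally show "norm (A - B) \<le> K1 * (\<Sum>j\<in>J. (e j)^2)" by (simp add: sum_distrib_left)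
    have "norm A + norm B \<le> (\<Sum>j\<in>J. norm (F j)) + (\<Sum>j\<in>J. norm (L j))"
      unfolding A_def B_def by (intro add_mono norm_sum)
    also have "\<dots> = (\<Sum>j\<in>J. norm (F j) + norm (L j))" by (simp add: sum.distrib)
    also have "\<dots> \<le> (\<Sum>j\<in>J. K2 * e j)" by (rule sum_mono) (rule assms(4))
    finally show "norm A + norm B \<le> K2 * (\<Sum>k\<in>J. e k)" by (simp add: sum_distrib_left)
  qed (use assms in \<open>auto intro!: sum_nonneg mult_nonneg_nonneg\<close>)
  also have "\<dots> = K1 * K2 * ((\<Sum>j\<in>J. (e j)^2) * (\<Sum>k\<in>J. e k))" by (simp add: algebra_simps)
  also have "\<dots> \<le> K1 * K2 * (2 * card J * (\<Sum>j\<in>J. (e j)^3))"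
    by (rule mult_left_mono[OF prod_sum_bound]) (use assms in auto)
  also have "\<dots> \<le> K1 * K2 * (2 * K * (\<Sum>j\<in>J. (e j)^3))"
    by (intro mult_left_mono mult_right_mono sum_nonneg) (use assms in auto)
  finally show ?thesis unfolding A_def B_def by (simp add: algebra_simps)
qed

theorem lemma3p1:
  fixes U :: "real \<Rightarrow> real" and a a0 :: real
  assumes "C3 U" and "compact_supp U"
    and "\<And>r. U (- r) = U r"
    and "a > 0" and "\<And>r. r \<ge> 0 \<Longrightarrow> U a \<le> U r"
    and "\<And>r. r \<ge> 0 \<Longrightarrow> U r = U a \<Longrightarrow> r = a"
    and "deriv (deriv U) a > 0"
    and "0 < a0" and "a0 < a"
  shows "\<exists>C>0. \<forall>N (z :: nat \<Rightarrow> 'a::euclidean_space) (x :: nat \<Rightarrow> 'a).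
    crystal U a N z \<longrightarrow>
    (\<forall>i<N. \<forall>j<N. i \<noteq> j \<longrightarrow> \<not> nbr a z i j \<longrightarrow> norm (x i - x j) > range_b U) \<longrightarrow>
    (\<forall>i<N. \<forall>j<N. nbr a z i j \<longrightarrow> norm (x i - x j) \<ge> a0) \<longrightarrow>
    (let h = (\<lambda>i. x i - z i); c = deriv (deriv U) a;
         S = (\<Sum>(i, j)\<in>nbr_pairs a N z. (norm (h i - h j)) ^ 3)
     in \<bar>Hen U N x - (Hen U N z + 1/2 * E1 c a N z h)\<bar> \<le> C * S
      \<and> \<bar>Gen U N x - E2 c a N z h\<bar> \<le> C * S)"
proof -
  define c where "c = deriv (deriv U) a"
  obtain M2 where M2: "\<And>r. \<bar>(deriv^^2) U r\<bar> \<le> M2" using D_bound[OF assms(1,2), of 2] by auto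
  obtain M3 where M3: "\<And>r. \<bar>(deriv^^3) U r\<bar> \<le> M3" using D_bound[OF assms(1,2), of 3] by auto
  have M2p: "M2 \<ge> 0" using M2[of 0] by linarith
  have M3p: "M3 \<ge> 0" using M3[of 0] by linarith
  have D1a: "deriv U a = 0" by (rule D1_a_zero[OF assms(1,4,5)])
  have bf1: "range_b U \<ge> 0" by (rule b_facts(1)[of U a]) (fact assms)+
  have bf2: "U s = 0" if "s > range_b U" for s by (rule b_facts(2)[of U a]) (fact assms that)+
  have bf3: "deriv U s = 0" if "s > range_b U" for s by (rule b_facts(3)[of U a]) (fact assms that)+
  have bf4: "range_b U \<ge> a" by (rule b_facts(4)[of U a]) (fact assms)+
  note bf = bf1 bf2 bf3 bf4
  obtain K where K: "\<And>N (z::nat \<Rightarrow> 'a) i. crystal U a N z \<Longrightarrow> card {j. j<N \<and> nbr a z i j} \<le> K"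
    using deg_bound[OF assms(4) bf(4)] by blast
  define CH where "CH = M3 / 6 + 2 * \<bar>c\<bar> / a"
  define K1 where "K1 = M3 / 2 + 2 * \<bar>c\<bar> / a + 2 * \<bar>c\<bar> / a0"
  define K2 where "K2 = M2 + \<bar>c\<bar>"
  have CHp: "CH \<ge> 0" unfolding CH_def using M3p assms(4) by auto
  have K1p: "K1 \<ge> 0" unfolding K1_def using M3p assms(4,8) by auto
  have K2p: "K2 \<ge> 0" unfolding K2_def using M2p by auto
  define C where "C = CH + 4 * K1 * K2 * real K + 1"
  have CK: "4 * K1 * K2 * real K \<ge> 0" using K1p K2p by auto
  show ?thesis
  proof (intro exI[of _ C] conjI allI impI)
    show "C > 0" unfolding C_def using CHp CK by linarith
    fix N and z x :: "nat \<Rightarrow> 'a"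
    assume cr: "crystal U a N z"
      and far: "\<forall>i<N. \<forall>j<N. i \<noteq> j \<longrightarrow> \<not> nbr a z i j \<longrightarrow> norm (x i - x j) > range_b U"
      and near: "\<forall>i<N. \<forall>j<N. nbr a z i j \<longrightarrow> norm (x i - x j) \<ge> a0"
    define h where "h = (\<lambda>i. x i - z i)"
    define NP where "NP = nbr_pairs a N z"
    define S where "S = (\<Sum>(i, j)\<in>NP. (norm (h i - h j)) ^ 3)"
    have xdec: "x i - x j = (z i - z j) + (h i - h j)" for i j unfolding h_def by (simp add: algebra_simps)
    have Sp: "S \<ge> 0" unfolding S_def by (rule sum_nonneg) auto
    have finNP: "finite NP" unfolding NP_def nbr_pairs_def
      by (rule finite_subset[of _ "{..<N} \<times> {..<N}"]) auto
    define P where "P = {(i,j). i<j \<and> j<(N::nat)}"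
    have finP: "finite P" unfolding P_def
      by (rule finite_subset[of _ "{..<N} \<times> {..<N}"]) auto
    have NPP: "NP \<subseteq> P" unfolding NP_def P_def nbr_pairs_def by auto
    have nbra: "norm (z i - z j) = a" if "nbr a z i j" for i j using that unfolding nbr_def by auto
    
    have Hsum: "Hen U N w = (\<Sum>(i,j)\<in>NP. U (norm (w i - w j)))"
      if "\<And>i j. i < j \<Longrightarrow> j < N \<Longrightarrow> \<not> nbr a z i j \<Longrightarrow> U (norm (w i - w j)) = 0" for w :: "nat \<Rightarrow> 'a"
    proof -
      have "Hen U N w = (\<Sum>(i,j)\<in>P. U (norm (w i - w j)))" unfolding Hen_def P_def by (rule sum_pairs)
      also have "\<dots> = (\<Sum>(i,j)\<in>NP. U (norm (w i - w j)))"
        by (rule sum.mono_neutral_right[OF finP NPP]) (use that in \<open>auto simp: P_def NP_def nbr_pairs_def\<close>)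
      finally show ?thesis .
    qed
    have Hx: "Hen U N x = (\<Sum>(i,j)\<in>NP. U (norm (x i - x j)))"
    proof (rule Hsum)
      fix i j assume ij: "i < j" "j < N" "\<not> nbr a z i j"
      have "i < N" "i \<noteq> j" using ij by auto
      then have "norm (x i - x j) > range_b U" using far ij by blast
      then show "U (norm (x i - x j)) = 0" using bf(2) by blast
    qed
    have Hz: "Hen U N z = (\<Sum>(i,j)\<in>NP. U (norm (z i - z j)))"
    proof (rule Hsum)
      fix i j assume ij: "i < j" "j < N" "\<not> nbr a z i j"
      have "i < N" "i \<noteq> j" using ij by auto
      then have "norm (z i - z j) = a \<or> norm (z i - z j) > range_b U" using cr ij unfolding crystal_def by blast
      then have "norm (z i - z j) > range_b U" using ij \<open>i \<noteq> j\<close> unfolding nbr_def by auto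
      then show "U (norm (z i - z j)) = 0" using bf(2) by blast
    qed
    have E1eq: "1/2 * E1 c a N z h = (\<Sum>(i,j)\<in>NP. 1/2 * (c / a\<^sup>2 * (inner (h i - h j) (z i - z j))\<^sup>2))"
      unfolding E1_def NP_def by (simp add: sum_distrib_left case_prod_beta)
    have Hdiff: "Hen U N x - (Hen U N z + 1/2 * E1 c a N z h) = (\<Sum>(i,j)\<in>NP.
        U (norm (x i - x j)) - U (norm (z i - z j)) - 1/2 * (c / a\<^sup>2 * (inner (h i - h j) (z i - z j))\<^sup>2))"
      unfolding Hx Hz E1eq by (simp add: sum_subtractf case_prod_beta)
    have "\<bar>Hen U N x - (Hen U N z + 1/2 * E1 c a N z h)\<bar> \<le> (\<Sum>(i,j)\<in>NP. CH * (norm (h i - h j))^3)"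
    proof -
      have "\<bar>Hen U N x - (Hen U N z + 1/2 * E1 c a N z h)\<bar> \<le> (\<Sum>(i,j)\<in>NP. \<bar>U (norm (x i - x j)) - U (norm (z i - z j)) - 1/2 * (c / a\<^sup>2 * (inner (h i - h j) (z i - z j))\<^sup>2)\<bar>)"
        unfolding Hdiff by (rule order_trans[OF sum_abs]) (simp add: case_prod_beta)
      also have "\<dots> \<le> (\<Sum>(i,j)\<in>NP. CH * (norm (h i - h j))^3)"
      proof (rule sum_mono)
        fix p assume "p \<in> NP"
        then obtain i j where p: "p = (i,j)" "nbr a z i j" unfolding NP_def nbr_pairs_def by auto
        show "(case p of (i, j) \<Rightarrow> \<bar>U (norm (x i - x j)) - U (norm (z i - z j)) - 1/2 * (c / a\<^sup>2 * (inner (h i - h j) (z i - z j))\<^sup>2)\<bar>)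
            \<le> (case p of (i, j) \<Rightarrow> CH * (norm (h i - h j))^3)"
          using H_point[OF assms(1,4) D1a M3 nbra[OF p(2)], of "h i - h j"] unfolding p(1) xdec[of i j, symmetric]
          by (simp add: c_def CH_def)
      qed
      finally show ?thesis .
    qed
    also have "\<dots> = CH * S" unfolding S_def by (simp add: sum_distrib_left case_prod_beta)
    also have "\<dots> \<le> C * S" by (rule mult_right_mono) (use Sp CK in \<open>auto simp: C_def\<close>)
    finally have Hres: "\<bar>Hen U N x - (Hen U N z + 1/2 * E1 c a N z h)\<bar> \<le> C * S" .
    
    define Nb where "Nb i = {j. j<N \<and> nbr a z i j}" for i
    define F where "F i j = (deriv U (norm (x i - x j)) / norm (x i - x j)) *\<^sub>R (x i - x j)" for i j
    define L where "L i j = (c / a\<^sup>2 * inner (h i - h j) (z i - z j)) *\<^sub>R (z i - z j)" for i j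
    have finNb: "finite (Nb i)" for i unfolding Nb_def by auto
    have distinct: "x k \<noteq> x j" if "k < N" "j < N" "k \<noteq> j" for k j
    proof (cases "nbr a z k j")
      case True then have "norm (x k - x j) \<ge> a0" using near[rule_format, OF that(1,2) True] by simp
      then show ?thesis using assms(8) by auto
    next
      case False then have "norm (x k - x j) > range_b U" using far[rule_format, OF that(1,2,3) False] by simp
      then have "norm (x k - x j) > 0" using bf(1) by linarith
      then show ?thesis by auto
    qed
    have grad: "grad_i U N x i = (\<Sum>j\<in>Nb i. F i j)" if "i < N" for i
    proof -
      have "grad_i U N x i = (\<Sum>j\<in>{..<N}-{i}. F i j)"
        unfolding F_def by (rule grad_formula[OF assms(1) that distinct])
      also have "\<dots> = (\<Sum>j\<in>Nb i. F i j)"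
      proof (rule sum.mono_neutral_right)
        show "Nb i \<subseteq> {..<N} - {i}" unfolding Nb_def nbr_def by auto
        show "\<forall>j\<in>{..<N} - {i} - Nb i. F i j = 0"
        proof
          fix j assume j: "j \<in> {..<N} - {i} - Nb i"
          have jj: "j < N" "i \<noteq> j" "\<not> nbr a z i j" using j unfolding Nb_def by auto
          have "norm (x i - x j) > range_b U" using far[rule_format, OF that jj] by simp
          then have "deriv U (norm (x i - x j)) = 0" by (rule bf(3))
          then show "F i j = 0" unfolding F_def by simp
        qed
      qed auto
      finally show ?thesis .
    qed
    have Gx: "Gen U N x = (\<Sum>i<N. (norm (\<Sum>j\<in>Nb i. F i j))\<^sup>2)"
      unfolding Gen_def by (rule sum.cong) (auto simp: grad)
    have E2eq: "E2 c a N z h = (\<Sum>i<N. (norm (\<Sum>j\<in>Nb i. L i j))\<^sup>2)"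
    proof -
      have eq1: "c\<^sup>2 / a ^ 4 * (norm v)\<^sup>2 = (norm ((c / a\<^sup>2) *\<^sub>R v))\<^sup>2" for v :: 'a
      proof -
        have "(norm ((c / a\<^sup>2) *\<^sub>R v))\<^sup>2 = (c / a\<^sup>2)\<^sup>2 * (norm v)\<^sup>2"
          by (simp add: power_mult_distrib power2_abs power_divide)
        also have "(c / a\<^sup>2)\<^sup>2 = c\<^sup>2 / a ^ 4" by (simp add: power_divide flip: power_mult)
        finally show ?thesis by simp
      qed
      have "E2 c a N z h = (\<Sum>i<N. c\<^sup>2 / a ^ 4 * (norm (\<Sum>j\<in>Nb i. inner (h i - h j) (z i - z j) *\<^sub>R (z i - z j)))\<^sup>2)"
        unfolding E2_def Nb_def by (simp only: sum_distrib_left)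
      also have "\<dots> = (\<Sum>i<N. (norm ((c / a\<^sup>2) *\<^sub>R (\<Sum>j\<in>Nb i. inner (h i - h j) (z i - z j) *\<^sub>R (z i - z j))))\<^sup>2)"
        by (simp only: eq1)
      also have "\<dots> = (\<Sum>i<N. (norm (\<Sum>j\<in>Nb i. L i j))\<^sup>2)"
        unfolding L_def scaleR_sum_right scaleR_scaleR ..
      finally show ?thesis .
    qed
    have "\<bar>Gen U N x - E2 c a N z h\<bar> \<le> (\<Sum>i<N. \<bar>(norm (\<Sum>j\<in>Nb i. F i j))\<^sup>2 - (norm (\<Sum>j\<in>Nb i. L i j))\<^sup>2\<bar>)"
      unfolding Gx E2eq sum_subtractf[symmetric] by (rule sum_abs)
    also have "\<dots> \<le> (\<Sum>i<N. 2 * K1 * K2 * K * (\<Sum>j\<in>Nb i. (norm (h i - h j))^3))"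
    proof (rule sum_mono)
      fix i assume i: "i \<in> {..<N}"
      show "\<bar>(norm (\<Sum>j\<in>Nb i. F i j))\<^sup>2 - (norm (\<Sum>j\<in>Nb i. L i j))\<^sup>2\<bar> \<le> 2 * K1 * K2 * K * (\<Sum>j\<in>Nb i. (norm (h i - h j))^3)"
      proof (rule per_i_bound[OF finNb])
        show "card (Nb i) \<le> K" unfolding Nb_def by (rule K[OF cr])
        fix j assume j: "j \<in> Nb i"
        then have nb: "nbr a z i j" "j < N" unfolding Nb_def by auto
        have "a0 \<le> norm (x i - x j)" using near[rule_format, of i j] i nb by blast
        then have ge: "norm ((z i - z j) + (h i - h j)) \<ge> a0" by (simp only: xdec)
        note GP = G_point[OF assms(1,4) D1a M2 M3 nbra[OF nb(1)] ge assms(8)]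
        have FF: "F i j = (deriv U (norm (z i - z j + (h i - h j))) / norm (z i - z j + (h i - h j))) *\<^sub>R (z i - z j + (h i - h j))"
          unfolding F_def xdec[of i j] ..
        have LL: "L i j = (deriv (deriv U) a / a\<^sup>2 * inner (h i - h j) (z i - z j)) *\<^sub>R (z i - z j)"
          unfolding L_def c_def ..
        show "norm (F i j - L i j) \<le> K1 * (norm (h i - h j))^2"
          using GP(3) unfolding FF LL K1_def c_def .
        show "norm (F i j) + norm (L i j) \<le> K2 * norm (h i - h j)"
          using GP(1,2) unfolding FF LL K2_def c_def by (simp add: algebra_simps)
      qed (use K1p K2p in auto)
    qed
    also have "\<dots> = 2 * K1 * K2 * K * (\<Sum>i<N. \<Sum>j\<in>Nb i. (norm (h i - h j))^3)"
      by (simp add: sum_distrib_left)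
    also have "(\<Sum>i<N. \<Sum>j\<in>Nb i. (norm (h i - h j))^3) = 2 * S"
      unfolding Nb_def S_def NP_def by (rule sum_sym) (simp add: norm_minus_commute)
    also have "2 * K1 * K2 * K * (2 * S) \<le> C * S"
    proof -
      have "2 * K1 * K2 * K * (2 * S) = (4 * K1 * K2 * K) * S" by simp
      also have "\<dots> \<le> C * S" by (rule mult_right_mono) (use Sp CHp in \<open>auto simp: C_def\<close>)
      finally show ?thesis .
    qed
    finally have Gres: "\<bar>Gen U N x - E2 c a N z h\<bar> \<le> C * S" .
    show "let h = (\<lambda>i. x i - z i); c = deriv (deriv U) a;
         S = (\<Sum>(i, j)\<in>nbr_pairs a N z. (norm (h i - h j)) ^ 3)
     in \<bar>Hen U N x - (Hen U N z + 1/2 * E1 c a N z h)\<bar> \<le> C * S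
      \<and> \<bar>Gen U N x - E2 c a N z h\<bar> \<le> C * S"
      unfolding Let_def using Hres Gres unfolding h_def c_def S_def NP_def by simp
  qed
qed

end
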